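(* Let $\mathcal{M}$ be a set of mappings over a schema $\Sigma$, $\mathcal{D}$ a database instance of $\Sigma$, and $q(\vec x)\leftarrow L_1(\vec v_1),\dots,L_n(\vec v_n)$ a conjunctive query. If the answer template matrix $\mathrm{atm}(\mathrm{unf}(q(\vec x),\mathrm{wrap}(\mathcal{M})))$ does not contain repeated rows, then $$|\mathrm{unf}(q(\vec x),\mathcal{M})^{\mathcal{D}}|=\sum_{q_u\in\mathrm{unf}(q,\mathrm{wrap}(\mathcal{M}))}|q_u(\vec x)^{\mathcal{D}}|.$$
   Context: A mapping is $L(\vec f(\vec x))\leftsquigarrow V(\vec x)$ with $L$ a concept or role name, $\vec f(\vec x)$ a tuple of terms each of the form $g(\vec y)$ ($g$ a function symbol, $\vec y\subseteq\vec x$), and $V$ a view name with extension $V^{\mathcal{D}}$ given by a query over $\Sigma$. Signature: $\mathrm{sign}(m)=(L,\vec f)$. Unfolding of a CQ $q(\vec x)\leftarrow L_1(\vec v_1),\dots,L_n(\vec v_n)$: the non-recursive Datalog query $(q_{\mathrm{unf}}(\vec x),\Pi)$ where $\Pi$ is a minimal (up to renaming) set of rules containing, for every tuple $(m_1,\dots,m_n)$ of mappings with $m_i=L_i(\vec f_i(\vec x_i))\leftsquigarrow V_i(\vec z_i)$ and every mgu $\sigma$ of $\{(L_i(\vec v_i),L_i(\vec f_i(\vec x_i)))\}$, the rule $q_{\mathrm{unf}}(\sigma(\vec x))\leftarrow V_1(\sigma(\vec z_1)),\dots,V_n(\sigma(\vec z_n))$; the sum ranges over these rules viewed as CQs $q_u$.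 Wrap: for each signature $(L,\vec f)$, the mappings of that signature $\{L(\vec f(\vec v_i))\leftsquigarrow V_i(\vec v_i)\}_i$ are replaced by the single mapping $L(\vec f(\vec v))\leftsquigarrow W(\vec v)$ with $W$ a fresh view for $(W(\vec v),\{W(\vec v_i)\leftarrow V_i(\vec v_i)\}_i)$; $\mathrm{wrap}(\mathcal{M})$ is the union over all signatures. Answer template matrix: if the rules of an unfolding are $q_{\mathrm{unf}}(\vec f_j(\vec y_j))\leftarrow V^j_1,\dots,V^j_n$ for $1\le j\le m$, where $\vec f_j$ is the tuple of function symbols occurring in the head, then $\mathrm{atm}(q_{\mathrm{unf}})$ is the matrix whose rows are $\vec f_1,\dots,\vec f_m$. *)

theory Defs
  imports Main
begin

datatype ('f, 'x) trm = Var 'x | Fun 'f "('f, 'x) trm list"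

primrec subst :: "('x \<Rightarrow> ('f, 'y) trm) \<Rightarrow> ('f, 'x) trm \<Rightarrow> ('f, 'y) trm" where
  "subst \<sigma> (Var x) = \<sigma> x"
| "subst \<sigma> (Fun f ts) = Fun f (map (subst \<sigma>) ts)"

datatype ('f, 'c) gtrm = Cst 'c | App 'f "('f, 'c) gtrm list"

primrec gval :: "('x \<Rightarrow> 'c) \<Rightarrow> ('f, 'x) trm \<Rightarrow> ('f, 'c) gtrm" where
  "gval \<alpha> (Var x) = Cst (\<alpha> x)"
| "gval \<alpha> (Fun f ts) = App f (map (gval \<alpha>) ts)"

definition is_unifier :: "('x \<Rightarrow> ('f, 'x) trm) \<Rightarrow> (('f, 'x) trm \<times> ('f, 'x) trm) set \<Rightarrow> bool" where
  "is_unifier \<sigma> E \<longleftrightarrow> (\<forall>(s, t) \<in> E. subst \<sigma> s = subst \<sigma> t)"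

definition is_mgu :: "('x \<Rightarrow> ('f, 'x) trm) \<Rightarrow> (('f, 'x) trm \<times> ('f, 'x) trm) set \<Rightarrow> bool" where
  "is_mgu \<sigma> E \<longleftrightarrow> is_unifier \<sigma> E \<and>
     (\<forall>\<theta>. is_unifier \<theta> E \<longrightarrow> (\<exists>\<delta>. \<forall>x. \<theta> x = subst \<delta> (\<sigma> x)))"

text \<open>A mapping  L(g1(ys1),...,gk(ysk)) <~ V(args):
  predicate (concept/role name) L, head terms gj(ysj), view name V, view variables args.\<close>
datatype ('L, 'f, 'w, 'vw) mapping =
  Mapping (m_pred: 'L) (m_head: "('f \<times> 'w list) list") (m_view: 'vw) (m_args: "'w list")

definition wf_mapping :: "('L, 'f, 'w, 'vw) mapping \<Rightarrow> bool" where
  "wf_mapping m \<longleftrightarrow> (\<forall>(g, ys) \<in> set (m_head m). set ys \<subseteq> set (m_args m))"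

datatype ('L, 'v) cq = CQ (cq_head: "'v list") (cq_body: "('L \<times> 'v list) list")

definition safe_cq :: "('L, 'v) cq \<Rightarrow> bool" where
  "safe_cq q \<longleftrightarrow> set (cq_head q) \<subseteq> (\<Union>(L, vs) \<in> set (cq_body q). set vs)"

datatype ('vw, 'f, 'x) rule = Rule (r_head: "('f, 'x) trm list") (r_body: "('vw \<times> ('f, 'x) trm list) list")

definition eval_rule :: "('vw \<Rightarrow> 'c list set) \<Rightarrow> ('vw, 'f, 'x) rule \<Rightarrow> ('f, 'c) gtrm list set" where
  "eval_rule ext r = {map (gval \<alpha>) (r_head r) | \<alpha>.
      \<forall>(V, ts) \<in> set (r_body r). map (gval \<alpha>) ts \<in> map Cst ` ext V}"

definition rename_rule :: "('x \<Rightarrow> 'x) \<Rightarrow> ('vw, 'f, 'x) rule \<Rightarrow> ('vw, 'f, 'x) rule" where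
  "rename_rule \<rho> r = Rule (map (subst (\<lambda>x. Var (\<rho> x))) (r_head r))
      (map (\<lambda>(V, ts). (V, map (subst (\<lambda>x. Var (\<rho> x))) ts)) (r_body r))"

text \<open>Query variables are tagged Inl; the variables of the mapping used for the i-th
  query atom are tagged Inr (i, w) (renaming apart).\<close>
definition unf_eqs :: "('L, 'v) cq \<Rightarrow> ('L, 'f, 'w, 'vw) mapping list
    \<Rightarrow> (('f, 'v + nat \<times> 'w) trm \<times> ('f, 'v + nat \<times> 'w) trm) set" where
  "unf_eqs q ms = set (concat (map (\<lambda>i.
      map (\<lambda>(u, (g, ys)). (Var (Inl u), Fun g (map (\<lambda>w. Var (Inr (i, w))) ys)))
        (zip (snd (cq_body q ! i)) (m_head (ms ! i)))) [0..<length ms]))"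

definition mk_rule :: "('L, 'v) cq \<Rightarrow> ('L, 'f, 'w, 'vw) mapping list
    \<Rightarrow> ('v + nat \<times> 'w \<Rightarrow> ('f, 'v + nat \<times> 'w) trm) \<Rightarrow> ('vw, 'f, 'v + nat \<times> 'w) rule" where
  "mk_rule q ms \<sigma> = Rule (map (\<lambda>v. \<sigma> (Inl v)) (cq_head q))
      (map (\<lambda>i. (m_view (ms ! i), map (\<lambda>w. \<sigma> (Inr (i, w))) (m_args (ms ! i)))) [0..<length ms])"

definition unf_rules :: "('L, 'v) cq \<Rightarrow> ('L, 'f, 'w, 'vw) mapping set
    \<Rightarrow> ('vw, 'f, 'v + nat \<times> 'w) rule set" where
  "unf_rules q M = {mk_rule q ms \<sigma> | ms \<sigma>.
      length ms = length (cq_body q) \<and> set ms \<subseteq> M \<and>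
      (\<forall>i < length ms. m_pred (ms ! i) = fst (cq_body q ! i) \<and>
          length (m_head (ms ! i)) = length (snd (cq_body q ! i))) \<and>
      is_mgu \<sigma> (unf_eqs q ms)}"

definition rename_rel :: "('vw, 'f, 'x) rule set \<Rightarrow> (('vw, 'f, 'x) rule \<times> ('vw, 'f, 'x) rule) set" where
  "rename_rel R = {(r, r'). r \<in> R \<and> r' \<in> R \<and> (\<exists>\<rho>. bij \<rho> \<and> rename_rule \<rho> r = r')}"

text \<open>The program of the unfolding: rules taken up to renaming (one class per rule).\<close>
definition unf_program :: "('L, 'v) cq \<Rightarrow> ('L, 'f, 'w, 'vw) mapping set
    \<Rightarrow> ('vw, 'f, 'v + nat \<times> 'w) rule set set" where
  "unf_program q M = unf_rules q M // rename_rel (unf_rules q M)"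

definition rule_rep :: "('vw, 'f, 'x) rule set \<Rightarrow> ('vw, 'f, 'x) rule" where
  "rule_rep C = (SOME r. r \<in> C)"

definition unf_answers :: "('L, 'v) cq \<Rightarrow> ('L, 'f, 'w, 'vw) mapping set
    \<Rightarrow> ('vw \<Rightarrow> 'c list set) \<Rightarrow> ('f, 'c) gtrm list set" where
  "unf_answers q M ext = (\<Union>r \<in> unf_rules q M. eval_rule ext r)"

definition msig :: "('L, 'f, 'w, 'vw) mapping \<Rightarrow> 'L \<times> ('f \<times> nat) list" where
  "msig m = (m_pred m, map (\<lambda>(g, ys). (g, length ys)) (m_head m))"

fun mk_terms :: "nat \<Rightarrow> ('f \<times> nat) list \<Rightarrow> ('f \<times> nat list) list" where
  "mk_terms k [] = []"
| "mk_terms k ((g, a) # r) = (g, [k..<k + a]) # mk_terms (k + a) r"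

text \<open>The single mapping of signature s, using the fresh view named s itself.\<close>
definition wmap :: "'L \<times> ('f \<times> nat) list \<Rightarrow> ('L, 'f, nat, 'L \<times> ('f \<times> nat) list) mapping" where
  "wmap s = Mapping (fst s) (mk_terms 0 (snd s)) s [0..<sum_list (map snd (snd s))]"

definition wrap :: "('L, 'f, 'w, 'vw) mapping set \<Rightarrow> ('L, 'f, nat, 'L \<times> ('f \<times> nat) list) mapping set" where
  "wrap M = wmap ` msig ` M"

text \<open>Extension of the fresh view W_s, defined by the rules W(v_i) <- V_i(v_i).\<close>
definition wrap_ext :: "('L, 'f, 'w, 'vw) mapping set \<Rightarrow> ('vw \<Rightarrow> 'c list set)
    \<Rightarrow> 'L \<times> ('f \<times> nat) list \<Rightarrow> 'c list set" where
  "wrap_ext M ext s = (\<Union>m \<in> {m \<in> M. msig m = s}.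
      {concat (map (\<lambda>(g, ys). map \<alpha> ys) (m_head m)) | \<alpha>. map \<alpha> (m_args m) \<in> ext (m_view m)})"

primrec head_sym :: "('f, 'x) trm \<Rightarrow> 'f option" where
  "head_sym (Var x) = None"
| "head_sym (Fun f ts) = Some f"

definition atm_row :: "('vw, 'f, 'x) rule \<Rightarrow> 'f option list" where
  "atm_row r = map head_sym (r_head r)"

definition atm_no_repeated_rows :: "('vw, 'f, 'x) rule set set \<Rightarrow> bool" where
  "atm_no_repeated_rows P \<longleftrightarrow> inj_on (\<lambda>C. atm_row (rule_rep C)) P"

end

theory Submission
  imports Defs
begin

fun tv :: "('f, 'x) trm \<Rightarrow> 'x set" where
  "tv (Var x) = {x}"
| "tv (Fun f ts) = (\<Union>t \<in> set ts. tv t)"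

lemma finite_tv: "finite (tv t)"
  by (induct t) auto

lemma gval_cong: "(\<And>x. x \<in> tv t \<Longrightarrow> \<alpha> x = \<alpha>' x) \<Longrightarrow> gval \<alpha> t = gval \<alpha>' t"
  by (induct t) auto

lemma subst_Var: "subst Var t = t"
  by (induct t) (auto simp: map_idI)

lemma gval_subst_ren: "gval \<alpha> (subst (\<lambda>x. Var (\<rho> x)) t) = gval (\<alpha> \<circ> \<rho>) t"
  by (induct t) auto

lemma gval_subst_ren_fun: "gval \<alpha> \<circ> subst (\<lambda>x. Var (\<rho> x)) = gval (\<alpha> \<circ> \<rho>)"
  by (rule ext) (simp add: gval_subst_ren)

primrec gsym :: "('f, 'c) gtrm \<Rightarrow> 'f option" where
  "gsym (Cst c) = None" | "gsym (App f ts) = Some f"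

lemma gsym_gval: "gsym (gval \<alpha> t) = head_sym t"
  by (cases t) auto

lemma rename_id: "rename_rule id r = r"
  by (cases r) (auto simp: rename_rule_def subst_Var[unfolded id_def] id_def map_idI split: prod.splits)

lemma eval_rename:
  assumes "bij \<rho>" shows "eval_rule ext (rename_rule \<rho> r) = eval_rule ext r"
proof
  show "eval_rule ext (rename_rule \<rho> r) \<subseteq> eval_rule ext r"
  proof
    fix a assume "a \<in> eval_rule ext (rename_rule \<rho> r)"
    then obtain \<alpha> where a: "a = map (gval \<alpha>) (r_head (rename_rule \<rho> r))"
      and b: "\<forall>(V, ts) \<in> set (r_body (rename_rule \<rho> r)). map (gval \<alpha>) ts \<in> map Cst ` ext V"
      unfolding eval_rule_def by blast
    have "a = map (gval (\<alpha> \<circ> \<rho>)) (r_head r)" using a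
      by (simp add: rename_rule_def gval_subst_ren)
    moreover have "\<forall>(V, ts) \<in> set (r_body r). map (gval (\<alpha> \<circ> \<rho>)) ts \<in> map Cst ` ext V"
    proof clarify
      fix V ts assume "(V, ts) \<in> set (r_body r)"
      then have "(V, map (subst (\<lambda>x. Var (\<rho> x))) ts) \<in> set (r_body (rename_rule \<rho> r))"
        by (force simp: rename_rule_def)
      then have "map (gval \<alpha>) (map (subst (\<lambda>x. Var (\<rho> x))) ts) \<in> map Cst ` ext V" using b by blast
      then show "map (gval (\<alpha> \<circ> \<rho>)) ts \<in> map Cst ` ext V" by (simp add: gval_subst_ren o_def)
    qed
    ultimately show "a \<in> eval_rule ext r" unfolding eval_rule_def by blast
  qed
next
  show "eval_rule ext r \<subseteq> eval_rule ext (rename_rule \<rho> r)"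
  proof
    fix a assume "a \<in> eval_rule ext r"
    then obtain \<alpha> where a: "a = map (gval \<alpha>) (r_head r)"
      and b: "\<forall>(V, ts) \<in> set (r_body r). map (gval \<alpha>) ts \<in> map Cst ` ext V"
      unfolding eval_rule_def by blast
    have e: "\<alpha> \<circ> inv \<rho> \<circ> \<rho> = \<alpha>" using assms by (auto simp: bij_def)
    have "a = map (gval (\<alpha> \<circ> inv \<rho>)) (r_head (rename_rule \<rho> r))" using a
      by (simp add: rename_rule_def gval_subst_ren e)
    moreover have "\<forall>(V, ts) \<in> set (r_body (rename_rule \<rho> r)). map (gval (\<alpha> \<circ> inv \<rho>)) ts \<in> map Cst ` ext V"
    proof clarify
      fix V ts assume "(V, ts) \<in> set (r_body (rename_rule \<rho> r))"
      then obtain ts0 where "(V, ts0) \<in> set (r_body r)" "ts = map (subst (\<lambda>x. Var (\<rho> x))) ts0"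
        by (auto simp: rename_rule_def)
      then show "map (gval (\<alpha> \<circ> inv \<rho>)) ts \<in> map Cst ` ext V" using b by (auto simp: gval_subst_ren_fun e)
    qed
    ultimately show "a \<in> eval_rule ext (rename_rule \<rho> r)" unfolding eval_rule_def by blast
  qed
qed

definition valid :: "('L, 'v) cq \<Rightarrow> ('L, 'f, 'w, 'vw) mapping list \<Rightarrow> bool" where
  "valid q ms \<longleftrightarrow> length ms = length (cq_body q) \<and>
      (\<forall>i < length ms. m_pred (ms ! i) = fst (cq_body q ! i) \<and>
          length (m_head (ms ! i)) = length (snd (cq_body q ! i)))"

definition idx :: "('L, 'v) cq \<Rightarrow> ('L, 'f, 'w, 'vw) mapping list \<Rightarrow> (nat \<times> nat) set" where
  "idx q ms = {(i, j). i < length ms \<and> j < length (snd (cq_body q ! i))}"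

abbreviation qv :: "('L, 'v) cq \<Rightarrow> nat \<Rightarrow> nat \<Rightarrow> 'v" where
  "qv q i j \<equiv> snd (cq_body q ! i) ! j"

abbreviation mh :: "('L, 'f, 'w, 'vw) mapping list \<Rightarrow> nat \<Rightarrow> nat \<Rightarrow> 'f \<times> 'w list" where
  "mh ms i j \<equiv> m_head (ms ! i) ! j"

lemma unf_eqs_char:
  assumes "valid q ms"
  shows "unf_eqs q ms = {(Var (Inl (qv q i j)), Fun (fst (mh ms i j)) (map (\<lambda>w. Var (Inr (i, w))) (snd (mh ms i j))))
     | i j. (i, j) \<in> idx q ms}"
proof -
  have "unf_eqs q ms = (\<Union>i\<in>{0..<length ms}. (\<lambda>(u, (g, ys)). (Var (Inl u), Fun g (map (\<lambda>w. Var (Inr (i, w))) ys)))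
          ` set (zip (snd (cq_body q ! i)) (m_head (ms ! i))))"
    by (simp add: unf_eqs_def)
  also have "\<dots> = (\<Union>i\<in>{0..<length ms}. (\<lambda>(u, (g, ys)). (Var (Inl u), Fun g (map (\<lambda>w. Var (Inr (i, w))) ys)))
          ` {(qv q i j, mh ms i j) | j. j < length (snd (cq_body q ! i))})"
    using assms unfolding valid_def by (intro SUP_cong refl arg_cong[where f="image _"]) (auto simp: set_zip)
  also have "\<dots> = {(Var (Inl (qv q i j)), Fun (fst (mh ms i j)) (map (\<lambda>w. Var (Inr (i, w))) (snd (mh ms i j))))
     | i j. (i, j) \<in> idx q ms}"
  proof (rule set_eqI, rule iffI)
    fix e assume "e \<in> (\<Union>i\<in>{0..<length ms}. (\<lambda>(u, (g, ys)). (Var (Inl u), Fun g (map (\<lambda>w. Var (Inr (i, w))) ys)))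
          ` {(qv q i j, mh ms i j) | j. j < length (snd (cq_body q ! i))})"
    then show "e \<in> {(Var (Inl (qv q i j)), Fun (fst (mh ms i j)) (map (\<lambda>w. Var (Inr (i, w))) (snd (mh ms i j))))
     | i j. (i, j) \<in> idx q ms}" unfolding idx_def by (auto split: prod.splits) (metis fst_conv snd_conv)
  next
    fix e assume "e \<in> {(Var (Inl (qv q i j)), Fun (fst (mh ms i j)) (map (\<lambda>w. Var (Inr (i, w))) (snd (mh ms i j))))
     | i j. (i, j) \<in> idx q ms}"
    then obtain i j where ij: "i < length ms" "j < length (snd (cq_body q ! i))"
      and e: "e = (Var (Inl (qv q i j)), Fun (fst (mh ms i j)) (map (\<lambda>w. Var (Inr (i, w))) (snd (mh ms i j))))"
      unfolding idx_def by auto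
    have "(qv q i j, mh ms i j) \<in> {(qv q i j, mh ms i j) | j. j < length (snd (cq_body q ! i))}" using ij by auto
    then have "e \<in> (\<lambda>(u, (g, ys)). (Var (Inl u), Fun g (map (\<lambda>w. Var (Inr (i, w))) ys)))
          ` {(qv q i j, mh ms i j) | j. j < length (snd (cq_body q ! i))}"
      unfolding e by (rule rev_image_eqI) (simp split: prod.splits)
    note X = this
    show "e \<in> (\<Union>i\<in>{0..<length ms}. (\<lambda>(u, (g, ys)). (Var (Inl u), Fun g (map (\<lambda>w. Var (Inr (i, w))) ys)))
          ` {(qv q i j, mh ms i j) | j. j < length (snd (cq_body q ! i))})"
      apply (rule UN_I[of i])
      using ij apply simp
      apply (rule X)
      done
  qed
  finally show ?thesis .
qed

lemma unifier_char:
  assumes "valid q ms"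
  shows "is_unifier \<sigma> (unf_eqs q ms) \<longleftrightarrow> (\<forall>(i, j) \<in> idx q ms.
     \<sigma> (Inl (qv q i j)) = Fun (fst (mh ms i j)) (map (\<lambda>w. \<sigma> (Inr (i, w))) (snd (mh ms i j))))"
proof
  assume H: "is_unifier \<sigma> (unf_eqs q ms)"
  show "\<forall>(i, j) \<in> idx q ms.
     \<sigma> (Inl (qv q i j)) = Fun (fst (mh ms i j)) (map (\<lambda>w. \<sigma> (Inr (i, w))) (snd (mh ms i j)))"
  proof clarify
    fix i j assume "(i, j) \<in> idx q ms"
    then have "(Var (Inl (qv q i j)), Fun (fst (mh ms i j)) (map (\<lambda>w. Var (Inr (i, w))) (snd (mh ms i j)))) \<in> unf_eqs q ms"
      unfolding unf_eqs_char[OF assms] by blast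
    then show "\<sigma> (Inl (qv q i j)) = Fun (fst (mh ms i j)) (map (\<lambda>w. \<sigma> (Inr (i, w))) (snd (mh ms i j)))"
      using H unfolding is_unifier_def by (force simp: o_def)
  qed
next
  assume "\<forall>(i, j) \<in> idx q ms.
     \<sigma> (Inl (qv q i j)) = Fun (fst (mh ms i j)) (map (\<lambda>w. \<sigma> (Inr (i, w))) (snd (mh ms i j)))"
  then show "is_unifier \<sigma> (unf_eqs q ms)"
    unfolding unf_eqs_char[OF assms] is_unifier_def by (auto simp: o_def)
qed

definition lnk :: "('L, 'v) cq \<Rightarrow> ('L, 'f, 'w, 'vw) mapping list \<Rightarrow> nat \<times> 'w \<Rightarrow> nat \<times> 'w \<Rightarrow> bool" where
  "lnk q ms x y \<longleftrightarrow> (\<exists>i j i' j' k. (i, j) \<in> idx q ms \<and> (i', j') \<in> idx q ms \<and> qv q i j = qv q i' j' \<and>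
     k < length (snd (mh ms i j)) \<and> k < length (snd (mh ms i' j')) \<and>
     x = (i, snd (mh ms i j) ! k) \<and> y = (i', snd (mh ms i' j') ! k))"

definition rep :: "('L, 'v) cq \<Rightarrow> ('L, 'f, 'w, 'vw) mapping list \<Rightarrow> nat \<times> 'w \<Rightarrow> nat \<times> 'w" where
  "rep q ms x = (SOME y. (lnk q ms)\<^sup>*\<^sup>* x y)"

definition cons :: "('L, 'v) cq \<Rightarrow> ('L, 'f, 'w, 'vw) mapping list \<Rightarrow> bool" where
  "cons q ms \<longleftrightarrow> (\<forall>(i, j) \<in> idx q ms. \<forall>(i', j') \<in> idx q ms. qv q i j = qv q i' j' \<longrightarrow>
     fst (mh ms i j) = fst (mh ms i' j') \<and> length (snd (mh ms i j)) = length (snd (mh ms i' j')))"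

definition occ :: "('L, 'v) cq \<Rightarrow> ('L, 'f, 'w, 'vw) mapping list \<Rightarrow> 'v \<Rightarrow> bool" where
  "occ q ms u \<longleftrightarrow> (\<exists>(i, j) \<in> idx q ms. qv q i j = u)"

definition occw :: "('L, 'v) cq \<Rightarrow> ('L, 'f, 'w, 'vw) mapping list \<Rightarrow> 'v \<Rightarrow> nat \<times> nat" where
  "occw q ms u = (SOME p. p \<in> idx q ms \<and> qv q (fst p) (snd p) = u)"

definition sig0 :: "('L, 'v) cq \<Rightarrow> ('L, 'f, 'w, 'vw) mapping list \<Rightarrow> 'v + nat \<times> 'w \<Rightarrow> ('f, 'v + nat \<times> 'w) trm" where
  "sig0 q ms v = (case v of Inr x \<Rightarrow> Var (Inr (rep q ms x))
     | Inl u \<Rightarrow> if occ q ms u then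
         Fun (fst (mh ms (fst (occw q ms u)) (snd (occw q ms u))))
           (map (\<lambda>w. Var (Inr (rep q ms (fst (occw q ms u), w)))) (snd (mh ms (fst (occw q ms u)) (snd (occw q ms u)))))
       else Var (Inl u))"

lemma lnk_sym: "lnk q ms x y \<Longrightarrow> lnk q ms y x"
  unfolding lnk_def by metis

lemma eqv_sym: "(lnk q ms)\<^sup>*\<^sup>* x y \<Longrightarrow> (lnk q ms)\<^sup>*\<^sup>* y x"
  by (induct rule: rtranclp_induct) (auto intro: converse_rtranclp_into_rtranclp lnk_sym)

lemma rep_eqv: "(lnk q ms)\<^sup>*\<^sup>* x (rep q ms x)"
  unfolding rep_def by (rule someI[of _ x]) simp

lemma rep_eq: assumes "(lnk q ms)\<^sup>*\<^sup>* x y" shows "rep q ms x = rep q ms y"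
proof -
  have "(\<lambda>z. (lnk q ms)\<^sup>*\<^sup>* x z) = (\<lambda>z. (lnk q ms)\<^sup>*\<^sup>* y z)"
    using assms eqv_sym[OF assms] by (auto intro: rtranclp_trans)
  then show ?thesis unfolding rep_def by simp
qed

lemma occw_prop: assumes "occ q ms u" shows "occw q ms u \<in> idx q ms" "qv q (fst (occw q ms u)) (snd (occw q ms u)) = u"
proof -
  have "\<exists>p. p \<in> idx q ms \<and> qv q (fst p) (snd p) = u" using assms unfolding occ_def by auto
  then have "occw q ms u \<in> idx q ms \<and> qv q (fst (occw q ms u)) (snd (occw q ms u)) = u"
    unfolding occw_def by (rule someI_ex)
  then show "occw q ms u \<in> idx q ms" "qv q (fst (occw q ms u)) (snd (occw q ms u)) = u" by auto
qed

lemma sig0_unifier: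
  assumes v: "valid q ms" and c: "cons q ms"
  shows "is_unifier (sig0 q ms) (unf_eqs q ms)"
  unfolding unifier_char[OF v]
proof clarify
  fix i j assume ij: "(i, j) \<in> idx q ms"
  define u where "u = qv q i j"
  have o: "occ q ms u" using ij unfolding occ_def u_def by auto
  obtain i0 j0 where p: "occw q ms u = (i0, j0)" by (cases "occw q ms u")
  have ij0: "(i0, j0) \<in> idx q ms" "qv q i0 j0 = u" using occw_prop[OF o] p by auto
  have cc: "fst (mh ms i0 j0) = fst (mh ms i j)" "length (snd (mh ms i0 j0)) = length (snd (mh ms i j))"
    using c ij ij0 unfolding cons_def u_def by fastforce+
  have l: "map (\<lambda>w. Var (Inr (rep q ms (i0, w)))) (snd (mh ms i0 j0)) =
        map (\<lambda>w. Var (Inr (rep q ms (i, w)))) (snd (mh ms i j))"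
  proof (rule nth_equalityI)
    show "length (map (\<lambda>w. Var (Inr (rep q ms (i0, w)))) (snd (mh ms i0 j0))) =
        length (map (\<lambda>w. Var (Inr (rep q ms (i, w)))) (snd (mh ms i j)))" using cc by simp
  next
    fix k assume "k < length (map (\<lambda>w. Var (Inr (rep q ms (i0, w)))) (snd (mh ms i0 j0)))"
    then have k: "k < length (snd (mh ms i0 j0))" "k < length (snd (mh ms i j))" using cc by auto
    have "lnk q ms (i0, snd (mh ms i0 j0) ! k) (i, snd (mh ms i j) ! k)"
      unfolding lnk_def using ij ij0 k u_def by blast
    then have "rep q ms (i0, snd (mh ms i0 j0) ! k) = rep q ms (i, snd (mh ms i j) ! k)"
      by (intro rep_eq) auto
    then show "map (\<lambda>w. Var (Inr (rep q ms (i0, w)))) (snd (mh ms i0 j0)) ! k =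
        map (\<lambda>w. Var (Inr (rep q ms (i, w)))) (snd (mh ms i j)) ! k" using k by simp
  qed
  show "sig0 q ms (Inl (qv q i j)) = Fun (fst (mh ms i j)) (map (\<lambda>w. sig0 q ms (Inr (i, w))) (snd (mh ms i j)))"
    using o p l cc unfolding u_def[symmetric] by (simp add: sig0_def)
qed

lemma unifier_lnk:
  assumes v: "valid q ms" and u: "is_unifier \<theta> (unf_eqs q ms)" and e: "(lnk q ms)\<^sup>*\<^sup>* x y"
  shows "\<theta> (Inr x) = \<theta> (Inr y)"
  using e
proof (induct rule: rtranclp_induct)
  case (step y z)
  from step(2) obtain i j i' j' k where H: "(i, j) \<in> idx q ms" "(i', j') \<in> idx q ms" "qv q i j = qv q i' j'"
     "k < length (snd (mh ms i j))" "k < length (snd (mh ms i' j'))"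
     "y = (i, snd (mh ms i j) ! k)" "z = (i', snd (mh ms i' j') ! k)" unfolding lnk_def by blast
  have "Fun (fst (mh ms i j)) (map (\<lambda>w. \<theta> (Inr (i, w))) (snd (mh ms i j))) =
        Fun (fst (mh ms i' j')) (map (\<lambda>w. \<theta> (Inr (i', w))) (snd (mh ms i' j')))"
  proof -
    have a: "\<forall>(i, j)\<in>idx q ms. \<theta> (Inl (qv q i j)) =
        Fun (fst (mh ms i j)) (map (\<lambda>w. \<theta> (Inr (i, w))) (snd (mh ms i j)))"
      using u unfolding unifier_char[OF v] .
    have "\<theta> (Inl (qv q i j)) = Fun (fst (mh ms i j)) (map (\<lambda>w. \<theta> (Inr (i, w))) (snd (mh ms i j)))"
      using a H(1) by blast
    moreover have "\<theta> (Inl (qv q i' j')) = Fun (fst (mh ms i' j')) (map (\<lambda>w. \<theta> (Inr (i', w))) (snd (mh ms i' j')))"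
      using a H(2) by blast
    ultimately show ?thesis using H(3) by simp
  qed
  then have "map (\<lambda>w. \<theta> (Inr (i, w))) (snd (mh ms i j)) ! k = map (\<lambda>w. \<theta> (Inr (i', w))) (snd (mh ms i' j')) ! k"
    by simp
  then show ?case using step(3) H by simp
qed simp

lemma sig0_mgu:
  assumes v: "valid q ms" and c: "cons q ms"
  shows "is_mgu (sig0 q ms) (unf_eqs q ms)"
  unfolding is_mgu_def
proof (intro conjI allI impI)
  show "is_unifier (sig0 q ms) (unf_eqs q ms)" by (rule sig0_unifier[OF v c])
  fix \<theta> assume u: "is_unifier \<theta> (unf_eqs q ms)"
  have "\<forall>x. \<theta> x = subst \<theta> (sig0 q ms x)"
  proof
    fix x show "\<theta> x = subst \<theta> (sig0 q ms x)"
    proof (cases x)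
      case (Inr y)
      then show ?thesis using unifier_lnk[OF v u rep_eqv[of q ms y]] by (simp add: sig0_def)
    next
      case (Inl w)
      show ?thesis
      proof (cases "occ q ms w")
        case True
        obtain i0 j0 where p: "occw q ms w = (i0, j0)" by (cases "occw q ms w")
        have ij0: "(i0, j0) \<in> idx q ms" "qv q i0 j0 = w" using occw_prop[OF True] p by auto
        have "\<theta> (Inl w) = Fun (fst (mh ms i0 j0)) (map (\<lambda>w. \<theta> (Inr (i0, w))) (snd (mh ms i0 j0)))"
          using u ij0 unfolding unifier_char[OF v] by fastforce
        also have "\<dots> = Fun (fst (mh ms i0 j0)) (map (\<lambda>w. \<theta> (Inr (rep q ms (i0, w)))) (snd (mh ms i0 j0)))"
          using unifier_lnk[OF v u rep_eqv] by simp
        finally show ?thesis using Inl True p by (simp add: sig0_def o_def)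
      next
        case False
        then show ?thesis using Inl by (simp add: sig0_def)
      qed
    qed
  qed
  then show "\<exists>\<delta>. \<forall>x. \<theta> x = subst \<delta> (sig0 q ms x)" by blast
qed

lemma ballpD: "\<forall>(i, j) \<in> A. P i j \<Longrightarrow> (i, j) \<in> A \<Longrightarrow> P i j"
  by auto

lemma App_map_Cst: "App f (map (Cst \<circ> g) xs) = App f' (map (Cst \<circ> g') ys) \<Longrightarrow> map g xs = map g' ys"
proof (induct xs arbitrary: ys)
  case Nil then show ?case by simp
next
  case (Cons x xs) then show ?case by (cases ys) auto
qed

definition sem :: "('L, 'v) cq \<Rightarrow> ('L, 'f, 'w, 'vw) mapping list \<Rightarrow> ('vw \<Rightarrow> 'c list set) \<Rightarrow> ('f, 'c) gtrm list set" where
  "sem q ms ext = {map T (cq_head q) | T \<beta>.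
     (\<forall>i < length ms. map (\<beta> i) (m_args (ms ! i)) \<in> ext (m_view (ms ! i))) \<and>
     (\<forall>(i, j) \<in> idx q ms. T (qv q i j) = App (fst (mh ms i j)) (map (Cst \<circ> \<beta> i) (snd (mh ms i j))))}"

lemma sem_cons: assumes "a \<in> sem q ms ext" shows "cons q ms"
proof -
  obtain T \<beta> where C: "a = map T (cq_head q) \<and>
     (\<forall>i < length ms. map (\<beta> i) (m_args (ms ! i)) \<in> ext (m_view (ms ! i))) \<and>
     (\<forall>(i, j) \<in> idx q ms. T (qv q i j) = App (fst (mh ms i j)) (map (Cst \<circ> \<beta> i) (snd (mh ms i j))))"
    using assms unfolding sem_def mem_Collect_eq by (elim exE) (erule that)
  have H: "\<forall>(i, j) \<in> idx q ms. T (qv q i j) = App (fst (mh ms i j)) (map (Cst \<circ> \<beta> i) (snd (mh ms i j)))"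
    using C by (rule conjunct2[OF conjunct2])
  have K: "fst (mh ms i j) = fst (mh ms i' j') \<and> length (snd (mh ms i j)) = length (snd (mh ms i' j'))"
    if a1: "(i, j) \<in> idx q ms" and a2: "(i', j') \<in> idx q ms" and a3: "qv q i j = qv q i' j'" for i j i' j'
  proof -
    have e1: "T (qv q i j) = App (fst (mh ms i j)) (map (Cst \<circ> \<beta> i) (snd (mh ms i j)))" using ballpD[OF H a1] .
    have e2: "T (qv q i' j') = App (fst (mh ms i' j')) (map (Cst \<circ> \<beta> i') (snd (mh ms i' j')))" using ballpD[OF H a2] .
    have "App (fst (mh ms i j)) (map (Cst \<circ> \<beta> i) (snd (mh ms i j))) =
          App (fst (mh ms i' j')) (map (Cst \<circ> \<beta> i') (snd (mh ms i' j')))"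
      using e1 e2 a3 by metis
    then show ?thesis by (metis gtrm.inject(2) length_map)
  qed
  show ?thesis unfolding cons_def using K by blast
qed

lemma safe_occ:
  assumes "safe_cq q" "valid q ms" "v \<in> set (cq_head q)"
  shows "\<exists>(i, j) \<in> idx q ms. qv q i j = v"
proof -
  obtain L vs where "(L, vs) \<in> set (cq_body q)" "v \<in> set vs" using assms(1,3) unfolding safe_cq_def by blast
  obtain i where i: "i < length (cq_body q)" "cq_body q ! i = (L, vs)"
    using \<open>(L, vs) \<in> set (cq_body q)\<close> by (auto simp: in_set_conv_nth)
  obtain j where "j < length vs" "vs ! j = v"
    using \<open>v \<in> set vs\<close> by (auto simp: in_set_conv_nth)
  note i this
  then show ?thesis using assms(2) unfolding idx_def valid_def by force
qed

lemma map_eq_Cst: "map f xs = map Cst c \<Longrightarrow> x \<in> set xs \<Longrightarrow> \<exists>d. f x = Cst d"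
proof -
  assume a: "map f xs = map Cst c" "x \<in> set xs"
  have "f x \<in> set (map f xs)" using a(2) by simp
  then have "f x \<in> Cst ` set c" using a(1) by simp
  then show ?thesis by blast
qed

definition unC :: "('f, 'c) gtrm \<Rightarrow> 'c" where
  "unC t = (case t of Cst c \<Rightarrow> c | App f ts \<Rightarrow> undefined)"

lemma unC_map: "map f xs = map Cst c \<Longrightarrow> map (\<lambda>x. unC (f x)) xs = c"
proof (induct xs arbitrary: c)
  case Nil then show ?case by simp
next
  case (Cons x xs) then show ?case by (cases c) (auto simp: unC_def)
qed

lemma mk_rule_simps:
  "r_head (mk_rule q ms \<sigma>) = map (\<lambda>v. \<sigma> (Inl v)) (cq_head q)"
  "r_body (mk_rule q ms \<sigma>) = map (\<lambda>i. (m_view (ms ! i), map (\<lambda>w. \<sigma> (Inr (i, w))) (m_args (ms ! i)))) [0..<length ms]"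
  by (simp_all add: mk_rule_def)

lemma body_cond:
  "(\<forall>(V, ts) \<in> set (r_body (mk_rule q ms \<sigma>)). map (gval \<alpha>) ts \<in> map Cst ` ext V) \<longleftrightarrow>
   (\<forall>i < length ms. map (\<lambda>w. gval \<alpha> (\<sigma> (Inr (i, w)))) (m_args (ms ! i)) \<in> map Cst ` ext (m_view (ms ! i)))"
  by (auto simp: mk_rule_simps o_def)

lemma eval_sem_sub:
  assumes v: "valid q ms" and wf: "\<forall>m \<in> set ms. wf_mapping m" and u: "is_unifier \<sigma> (unf_eqs q ms)"
  shows "eval_rule ext (mk_rule q ms \<sigma>) \<subseteq> sem q ms ext"
proof
  fix a assume "a \<in> eval_rule ext (mk_rule q ms \<sigma>)"
  then obtain \<alpha> where a: "a = map (gval \<alpha>) (r_head (mk_rule q ms \<sigma>))"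
    and b0: "\<forall>(V, ts) \<in> set (r_body (mk_rule q ms \<sigma>)). map (gval \<alpha>) ts \<in> map Cst ` ext V"
    unfolding eval_rule_def by blast
  have b: "\<forall>i < length ms. map (\<lambda>w. gval \<alpha> (\<sigma> (Inr (i, w)))) (m_args (ms ! i)) \<in> map Cst ` ext (m_view (ms ! i))"
    using b0 unfolding body_cond .
  define \<beta> where "\<beta> i w = unC (gval \<alpha> (\<sigma> (Inr (i, w))))" for i w
  define T where "T u = gval \<alpha> (\<sigma> (Inl u))" for u
  have f1: "gval \<alpha> (\<sigma> (Inr (i, w))) = Cst (\<beta> i w)" if il: "i < length ms" and wi: "w \<in> set (m_args (ms ! i))" for i w
  proof -
    have "map (\<lambda>w. gval \<alpha> (\<sigma> (Inr (i, w)))) (m_args (ms ! i)) \<in> map Cst ` ext (m_view (ms ! i))"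
      using b il by blast
    then obtain c where "map (\<lambda>w. gval \<alpha> (\<sigma> (Inr (i, w)))) (m_args (ms ! i)) = map Cst c" by blast
    then obtain d where "gval \<alpha> (\<sigma> (Inr (i, w))) = Cst d" using map_eq_Cst wi by fastforce
    then show ?thesis by (simp add: \<beta>_def unC_def)
  qed
  have f2: "map (\<beta> i) (m_args (ms ! i)) \<in> ext (m_view (ms ! i))" if il: "i < length ms" for i
  proof -
    obtain c where c: "c \<in> ext (m_view (ms ! i))" "map (\<lambda>w. gval \<alpha> (\<sigma> (Inr (i, w)))) (m_args (ms ! i)) = map Cst c"
    proof -
      have "map (\<lambda>w. gval \<alpha> (\<sigma> (Inr (i, w)))) (m_args (ms ! i)) \<in> map Cst ` ext (m_view (ms ! i))"
        using b il by blast
      then show ?thesis using that by blast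
    qed
    then have "map (\<beta> i) (m_args (ms ! i)) = c" unfolding \<beta>_def using unC_map[OF c(2)] by simp
    then show ?thesis using c by simp
  qed
  have f3: "T (qv q i j) = App (fst (mh ms i j)) (map (Cst \<circ> \<beta> i) (snd (mh ms i j)))" if ij: "(i, j) \<in> idx q ms" for i j
  proof -
    have s: "\<sigma> (Inl (qv q i j)) = Fun (fst (mh ms i j)) (map (\<lambda>w. \<sigma> (Inr (i, w))) (snd (mh ms i j)))"
      using ballpD[OF u[unfolded unifier_char[OF v]] ij(1)] .
    have il: "i < length ms" "j < length (m_head (ms ! i))" using ij v unfolding idx_def valid_def by auto
    then have "mh ms i j \<in> set (m_head (ms ! i))" by simp
    then have sub: "set (snd (mh ms i j)) \<subseteq> set (m_args (ms ! i))" using wf il(1) unfolding wf_mapping_def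
      by (metis (no_types, lifting) case_prodD nth_mem prod.collapse)
    have "map (\<lambda>w. gval \<alpha> (\<sigma> (Inr (i, w)))) (snd (mh ms i j)) = map (Cst \<circ> \<beta> i) (snd (mh ms i j))"
      using f1[OF il(1)] sub by auto
    then show ?thesis unfolding T_def s by (simp add: o_def)
  qed
  have "a = map T (cq_head q)" unfolding a T_def by (simp add: mk_rule_simps)
  then show "a \<in> sem q ms ext" unfolding sem_def using f2 f3 by blast
qed

lemma eval_sem_sup:
  assumes v: "valid q ms" and sf: "safe_cq q" and m: "is_mgu \<sigma> (unf_eqs q ms)"
  shows "sem q ms ext \<subseteq> eval_rule ext (mk_rule q ms \<sigma>)"
proof
  fix a assume a0: "a \<in> sem q ms ext"
  have c: "cons q ms" by (rule sem_cons[OF a0])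
  obtain T \<beta> where C: "a = map T (cq_head q) \<and>
     (\<forall>i < length ms. map (\<beta> i) (m_args (ms ! i)) \<in> ext (m_view (ms ! i))) \<and>
     (\<forall>(i, j) \<in> idx q ms. T (qv q i j) = App (fst (mh ms i j)) (map (Cst \<circ> \<beta> i) (snd (mh ms i j))))"
    using a0 unfolding sem_def mem_Collect_eq by (elim exE) (erule that)
  have a: "a = map T (cq_head q)" using C by (rule conjunct1)
  have hv: "\<forall>i < length ms. map (\<beta> i) (m_args (ms ! i)) \<in> ext (m_view (ms ! i))" using C by (rule conjunct1[OF conjunct2])
  have hT: "\<forall>(i, j) \<in> idx q ms. T (qv q i j) = App (fst (mh ms i j)) (map (Cst \<circ> \<beta> i) (snd (mh ms i j)))"
    using C by (rule conjunct2[OF conjunct2])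
  have u: "is_unifier \<sigma> (unf_eqs q ms)" using m unfolding is_mgu_def by (rule conjunct1)
  have mg: "\<forall>\<theta>. is_unifier \<theta> (unf_eqs q ms) \<longrightarrow> (\<exists>\<delta>. \<forall>x. \<theta> x = subst \<delta> (\<sigma> x))"
    using m unfolding is_mgu_def by (rule conjunct2)
  obtain \<delta> where \<delta>: "\<forall>x. sig0 q ms x = subst \<delta> (\<sigma> x)"
    using mg[rule_format, OF sig0_unifier[OF v c]] by (elim exE) (erule that)
  have bl: "\<beta> (fst x) (snd x) = \<beta> (fst y) (snd y)" if "(lnk q ms)\<^sup>*\<^sup>* x y" for x y
    using that
  proof (induct rule: rtranclp_induct)
    case (step y z)
    from step(2) obtain i j i' j' k where H: "(i, j) \<in> idx q ms" "(i', j') \<in> idx q ms" "qv q i j = qv q i' j'"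
       "k < length (snd (mh ms i j))" "k < length (snd (mh ms i' j'))"
       "y = (i, snd (mh ms i j) ! k)" "z = (i', snd (mh ms i' j') ! k)" unfolding lnk_def by blast
    have "T (qv q i j) = App (fst (mh ms i j)) (map (Cst \<circ> \<beta> i) (snd (mh ms i j)))" using ballpD[OF hT H(1)] .
    moreover have "T (qv q i' j') = App (fst (mh ms i' j')) (map (Cst \<circ> \<beta> i') (snd (mh ms i' j')))" using ballpD[OF hT H(2)] .
    ultimately have "App (fst (mh ms i j)) (map (Cst \<circ> \<beta> i) (snd (mh ms i j))) =
        App (fst (mh ms i' j')) (map (Cst \<circ> \<beta> i') (snd (mh ms i' j')))"
      using H(3) by metis
    then have "map (\<beta> i) (snd (mh ms i j)) = map (\<beta> i') (snd (mh ms i' j'))" by (rule App_map_Cst)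
    then have "map (\<beta> i) (snd (mh ms i j)) ! k = map (\<beta> i') (snd (mh ms i' j')) ! k" by simp
    then show ?case using step(3) H by simp
  qed simp
  define \<alpha> where "\<alpha> y = (case \<delta> y of Var (Inr x) \<Rightarrow> \<beta> (fst x) (snd x) | _ \<Rightarrow> undefined)" for y
  have f1: "gval \<alpha> (\<sigma> (Inr (i, w))) = Cst (\<beta> i w)" for i w
  proof -
    have "sig0 q ms (Inr (i, w)) = subst \<delta> (\<sigma> (Inr (i, w)))" using \<delta> by blast
    then have e: "subst \<delta> (\<sigma> (Inr (i, w))) = Var (Inr (rep q ms (i, w)))" by (simp add: sig0_def)
    then obtain y where y: "\<sigma> (Inr (i, w)) = Var y" by (cases "\<sigma> (Inr (i, w))") auto
    then have "\<delta> y = Var (Inr (rep q ms (i, w)))" using e by simp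
    then have "gval \<alpha> (\<sigma> (Inr (i, w))) = Cst (\<beta> (fst (rep q ms (i, w))) (snd (rep q ms (i, w))))"
      using y by (simp add: \<alpha>_def)
    also have "\<dots> = Cst (\<beta> i w)" using bl[OF rep_eqv[of q ms "(i, w)"]] by simp
    finally show ?thesis .
  qed
  have hd: "map (gval \<alpha>) (r_head (mk_rule q ms \<sigma>)) = map T (cq_head q)"
  proof -
    have "gval \<alpha> (\<sigma> (Inl x)) = T x" if x: "x \<in> set (cq_head q)" for x
    proof -
      obtain i j where ij: "(i, j) \<in> idx q ms" "qv q i j = x" using safe_occ[OF sf v x] by blast
      have "\<sigma> (Inl (qv q i j)) = Fun (fst (mh ms i j)) (map (\<lambda>w. \<sigma> (Inr (i, w))) (snd (mh ms i j)))"
        using ballpD[OF u[unfolded unifier_char[OF v]] ij(1)] .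
      moreover have "T (qv q i j) = App (fst (mh ms i j)) (map (Cst \<circ> \<beta> i) (snd (mh ms i j)))" using ballpD[OF hT ij(1)] .
      ultimately show ?thesis using ij(2) f1 by (simp add: o_def)
    qed
    then show ?thesis by (simp add: mk_rule_simps)
  qed
  have bd: "\<forall>i < length ms. map (\<lambda>w. gval \<alpha> (\<sigma> (Inr (i, w)))) (m_args (ms ! i)) \<in> map Cst ` ext (m_view (ms ! i))"
  proof (intro allI impI)
    fix i assume "i < length ms"
    then have "map Cst (map (\<beta> i) (m_args (ms ! i))) \<in> map Cst ` ext (m_view (ms ! i))" using hv by blast
    then show "map (\<lambda>w. gval \<alpha> (\<sigma> (Inr (i, w)))) (m_args (ms ! i)) \<in> map Cst ` ext (m_view (ms ! i))"
      by (simp add: f1 o_def)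
  qed
  show "a \<in> eval_rule ext (mk_rule q ms \<sigma>)"
  proof -
    have bd': "\<forall>(V, ts) \<in> set (r_body (mk_rule q ms \<sigma>)). map (gval \<alpha>) ts \<in> map Cst ` ext V"
      unfolding body_cond by (rule bd)
    have "a = map (gval \<alpha>) (r_head (mk_rule q ms \<sigma>)) \<and>
       (\<forall>(V, ts) \<in> set (r_body (mk_rule q ms \<sigma>)). map (gval \<alpha>) ts \<in> map Cst ` ext V)"
      using hd bd' a by simp
    then show ?thesis unfolding eval_rule_def by blast
  qed
qed

lemma length_mk_terms: "length (mk_terms k s) = length s"
  by (induct s arbitrary: k) auto

lemma mk_terms_vars: "(g, ys) \<in> set (mk_terms k s) \<Longrightarrow> set ys \<subseteq> {k..<k + sum_list (map snd s)}"
proof (induct s arbitrary: k)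
  case Nil then show ?case by simp
next
  case (Cons a s)
  obtain g0 n where a: "a = (g0, n)" by (cases a)
  show ?case using Cons(2) Cons(1)[of "k + n"] unfolding a by fastforce
qed

abbreviation hsig :: "('f \<times> 'w list) list \<Rightarrow> ('f \<times> nat) list" where
  "hsig H \<equiv> map (\<lambda>(g, ys). (g, length ys)) H"

lemma mk_terms_nth:
  assumes "j < length H"
  shows "fst (mk_terms k (hsig H) ! j) = fst (H ! j) \<and>
    map (\<lambda>n. concat (map (\<lambda>(g, ys). map \<alpha> ys) H) ! (n - k)) (snd (mk_terms k (hsig H) ! j)) = map \<alpha> (snd (H ! j))"
  using assms
proof (induct H arbitrary: k j)
  case Nil then show ?case by simp
next
  case (Cons a H)
  obtain g ys where a: "a = (g, ys)" by (cases a)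
  show ?case
  proof (cases j)
    case 0
    have "map (\<lambda>n. (map \<alpha> ys @ concat (map (\<lambda>(g, ys). map \<alpha> ys) H)) ! (n - k)) [k..<k + length ys] = map \<alpha> ys"
      by (rule nth_equalityI) (auto simp: nth_append)
    then show ?thesis using 0 a by simp
  next
    case (Suc j')
    have j': "j' < length H" using Cons(2) Suc by simp
    have IH: "fst (mk_terms (k + length ys) (hsig H) ! j') = fst (H ! j') \<and>
      map (\<lambda>n. concat (map (\<lambda>(g, ys). map \<alpha> ys) H) ! (n - (k + length ys))) (snd (mk_terms (k + length ys) (hsig H) ! j')) =
      map \<alpha> (snd (H ! j'))" using Cons(1)[OF j'] .
    have mem: "mk_terms (k + length ys) (hsig H) ! j' \<in> set (mk_terms (k + length ys) (hsig H))"
      using j' by (simp add: length_mk_terms)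
    have ge: "\<forall>n \<in> set (snd (mk_terms (k + length ys) (hsig H) ! j')). k + length ys \<le> n"
    proof -
      have "set (snd (mk_terms (k + length ys) (hsig H) ! j')) \<subseteq> {k + length ys..<k + length ys + sum_list (map snd (hsig H))}"
        using mk_terms_vars[of "fst (mk_terms (k + length ys) (hsig H) ! j')" "snd (mk_terms (k + length ys) (hsig H) ! j')"
            "k + length ys" "hsig H"] mem by simp
      then show ?thesis by auto
    qed
    have "map (\<lambda>n. (map \<alpha> ys @ concat (map (\<lambda>(g, ys). map \<alpha> ys) H)) ! (n - k)) (snd (mk_terms (k + length ys) (hsig H) ! j'))
        = map (\<lambda>n. concat (map (\<lambda>(g, ys). map \<alpha> ys) H) ! (n - (k + length ys))) (snd (mk_terms (k + length ys) (hsig H) ! j'))"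
      using ge by (intro map_cong refl) (auto simp: nth_append)
    then show ?thesis using IH Suc a by simp
  qed
qed

lemma length_concat_hsig: "length (concat (map (\<lambda>(g, ys). map \<alpha> ys) H)) = sum_list (map snd (hsig H))"
  by (induct H) auto

lemma wf_wmap: "wf_mapping (wmap s)"
  unfolding wf_mapping_def wmap_def using mk_terms_vars[where k=0] by fastforce

lemma wmap_simps[simp]:
  "m_pred (wmap s) = fst s" "m_head (wmap s) = mk_terms 0 (snd s)" "m_view (wmap s) = s"
  "m_args (wmap s) = [0..<sum_list (map snd (snd s))]"
  by (simp_all add: wmap_def)

lemma msig_simps[simp]: "fst (msig m) = m_pred m" "snd (msig m) = hsig (m_head m)"
  by (simp_all add: msig_def)

lemma map_Cst_cong: "map g zs = map g' ys \<Longrightarrow> map (Cst \<circ> g) zs = map (Cst \<circ> g') ys"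
  by (metis map_map)

lemma idx_same:
  fixes ws :: "('L, 'f, 'w1, 'vw1) mapping list" and ms :: "('L, 'f2, 'w2, 'vw2) mapping list"
  shows "length ws = length ms \<Longrightarrow> idx q ws = idx q ms"
  unfolding idx_def by simp

lemma sem_M_to_W:
  assumes v: "valid q ms" and sub: "set ms \<subseteq> M"
  shows "sem q ms ext \<subseteq> sem q (map (\<lambda>m. wmap (msig m)) ms) (wrap_ext M ext)"
proof
  fix a assume a0: "a \<in> sem q ms ext"
  define ws where "ws = map (\<lambda>m. wmap (msig m)) ms"
  obtain T \<beta> where C: "a = map T (cq_head q) \<and>
     (\<forall>i < length ms. map (\<beta> i) (m_args (ms ! i)) \<in> ext (m_view (ms ! i))) \<and>
     (\<forall>(i, j) \<in> idx q ms. T (qv q i j) = App (fst (mh ms i j)) (map (Cst \<circ> \<beta> i) (snd (mh ms i j))))"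
    using a0 unfolding sem_def mem_Collect_eq by (elim exE) (erule that)
  have a: "a = map T (cq_head q)" using C by (rule conjunct1)
  have hv: "\<forall>i < length ms. map (\<beta> i) (m_args (ms ! i)) \<in> ext (m_view (ms ! i))" using C by (rule conjunct1[OF conjunct2])
  have hT: "\<forall>(i, j) \<in> idx q ms. T (qv q i j) = App (fst (mh ms i j)) (map (Cst \<circ> \<beta> i) (snd (mh ms i j)))"
    using C by (rule conjunct2[OF conjunct2])
  define L where "L i = concat (map (\<lambda>(g, ys). map (\<beta> i) ys) (m_head (ms ! i)))" for i
  define \<beta>' where "\<beta>' i n = L i ! n" for i n
  have lw: "length ws = length ms" unfolding ws_def by simp
  have wsi: "ws ! i = wmap (msig (ms ! i))" if "i < length ms" for i using that unfolding ws_def by simp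
  have hv': "\<forall>i < length ws. map (\<beta>' i) (m_args (ws ! i)) \<in> wrap_ext M ext (m_view (ws ! i))"
  proof (intro allI impI)
    fix i assume i: "i < length ws"
    then have i': "i < length ms" using lw by simp
    have "m_args (ws ! i) = [0..<length (L i)]" unfolding wsi[OF i'] L_def
      by (simp only: wmap_simps msig_simps length_concat_hsig)
    then have "map (\<beta>' i) (m_args (ws ! i)) = L i"
      by (auto intro: nth_equalityI simp: \<beta>'_def)
    moreover have "ms ! i \<in> M" using sub i' by auto
    moreover have "L i \<in> {concat (map (\<lambda>(g, ys). map \<alpha> ys) (m_head (ms ! i))) | \<alpha>. map \<alpha> (m_args (ms ! i)) \<in> ext (m_view (ms ! i))}"
      unfolding L_def using hv i' by blast
    ultimately show "map (\<beta>' i) (m_args (ws ! i)) \<in> wrap_ext M ext (m_view (ws ! i))"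
      unfolding wrap_ext_def wsi[OF i'] by auto
  qed
  have hT': "\<forall>(i, j) \<in> idx q ws. T (qv q i j) = App (fst (mh ws i j)) (map (Cst \<circ> \<beta>' i) (snd (mh ws i j)))"
  proof (intro ballI, clarify)
    fix i j assume ij: "(i, j) \<in> idx q ws"
    then have ij': "(i, j) \<in> idx q ms" using lw unfolding idx_def by simp
    have il: "i < length ms" "j < length (m_head (ms ! i))" using ij' v unfolding idx_def valid_def by auto
    have K: "fst (mk_terms 0 (hsig (m_head (ms ! i))) ! j) = fst (m_head (ms ! i) ! j) \<and>
      map (\<lambda>n. L i ! (n - 0)) (snd (mk_terms 0 (hsig (m_head (ms ! i))) ! j)) = map (\<beta> i) (snd (m_head (ms ! i) ! j))"
      unfolding L_def by (rule mk_terms_nth[OF il(2)])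
    have "T (qv q i j) = App (fst (mh ms i j)) (map (Cst \<circ> \<beta> i) (snd (mh ms i j)))" using ballpD[OF hT ij'] .
    also have "\<dots> = App (fst (mh ws i j)) (map (Cst \<circ> \<beta>' i) (snd (mh ws i j)))"
    proof -
      have "map (\<beta>' i) (snd (mh ws i j)) = map (\<beta> i) (snd (mh ms i j))"
        using K unfolding wsi[OF il(1)] \<beta>'_def by simp
      then have "map (Cst \<circ> \<beta> i) (snd (mh ms i j)) = map (Cst \<circ> \<beta>' i) (snd (mh ws i j))"
        by (rule map_Cst_cong[OF sym])
      then show ?thesis using K unfolding wsi[OF il(1)] by simp
    qed
    finally show "T (qv q i j) = App (fst (mh ws i j)) (map (Cst \<circ> \<beta>' i) (snd (mh ws i j)))" .
  qed
  show "a \<in> sem q (map (\<lambda>m. wmap (msig m)) ms) (wrap_ext M ext)"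
    unfolding ws_def[symmetric] sem_def mem_Collect_eq
    by (rule exI[of _ T], rule exI[of _ \<beta>'], intro conjI a hv' hT')
qed

lemma sem_W_to_M:
  fixes M :: "('L, 'f, 'w, 'vw) mapping set"
  assumes v: "valid q ws" and sub: "set ws \<subseteq> wrap M" and a0: "a \<in> sem q ws (wrap_ext M ext)"
  shows "\<exists>ms. valid q ms \<and> set ms \<subseteq> M \<and> a \<in> sem q ms ext"
proof -
  obtain T \<beta>' where C: "a = map T (cq_head q) \<and>
     (\<forall>i < length ws. map (\<beta>' i) (m_args (ws ! i)) \<in> wrap_ext M ext (m_view (ws ! i))) \<and>
     (\<forall>(i, j) \<in> idx q ws. T (qv q i j) = App (fst (mh ws i j)) (map (Cst \<circ> \<beta>' i) (snd (mh ws i j))))"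
    using a0 unfolding sem_def mem_Collect_eq by (elim exE) (erule that)
  have a: "a = map T (cq_head q)" using C by (rule conjunct1)
  have hv: "\<forall>i < length ws. map (\<beta>' i) (m_args (ws ! i)) \<in> wrap_ext M ext (m_view (ws ! i))" using C by (rule conjunct1[OF conjunct2])
  have hT: "\<forall>(i, j) \<in> idx q ws. T (qv q i j) = App (fst (mh ws i j)) (map (Cst \<circ> \<beta>' i) (snd (mh ws i j)))"
    using C by (rule conjunct2[OF conjunct2])
  define P where "P i p \<longleftrightarrow> fst p \<in> M \<and> ws ! i = wmap (msig (fst p)) \<and>
      map (\<beta>' i) (m_args (ws ! i)) = concat (map (\<lambda>(g, ys). map (snd p) ys) (m_head (fst p))) \<and>
      map (snd p) (m_args (fst p)) \<in> ext (m_view (fst p))" for i p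
  have ex: "\<forall>i. \<exists>p. i < length ws \<longrightarrow> P i p"
  proof
    fix i show "\<exists>p. i < length ws \<longrightarrow> P i p"
    proof (cases "i < length ws")
      case True
      have "ws ! i \<in> wrap M" using sub True by auto
      then obtain m0 where m0: "m0 \<in> M" "ws ! i = wmap (msig m0)" unfolding wrap_def by auto
      have "map (\<beta>' i) (m_args (ws ! i)) \<in> wrap_ext M ext (msig m0)" using hv True m0(2) by (metis wmap_simps(3))
      then obtain m \<alpha> where m: "m \<in> M" "msig m = msig m0"
        "map (\<beta>' i) (m_args (ws ! i)) = concat (map (\<lambda>(g, ys). map \<alpha> ys) (m_head m))"
        "map \<alpha> (m_args m) \<in> ext (m_view m)"
        unfolding wrap_ext_def by auto
      have "P i (m, \<alpha>)" unfolding P_def using m m0 by simp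
      then show ?thesis by blast
    qed simp
  qed
  obtain F where F: "\<forall>i. i < length ws \<longrightarrow> P i (F i)"
    using choice[OF ex] by (elim exE) (erule that)
  define ms where "ms = map (\<lambda>i. fst (F i)) [0..<length ws]"
  define \<beta> where "\<beta> i = snd (F i)" for i
  have lm: "length ms = length ws" unfolding ms_def by simp
  have msi: "ms ! i = fst (F i)" if "i < length ws" for i using that unfolding ms_def by simp
  have Pi: "P i (F i)" if "i < length ws" for i using F that by blast
  have wsi: "ws ! i = wmap (msig (ms ! i))" if "i < length ws" for i using Pi[OF that] msi[OF that] unfolding P_def by simp
  have vm: "valid q ms"
    using v unfolding valid_def
  proof (intro conjI allI impI)
    assume "length ws = length (cq_body q) \<and>
      (\<forall>i<length ws. m_pred (ws ! i) = fst (cq_body q ! i) \<and> length (m_head (ws ! i)) = length (snd (cq_body q ! i)))"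
    then show "length ms = length (cq_body q)" using lm by simp
  next
    fix i assume H: "length ws = length (cq_body q) \<and>
      (\<forall>i<length ws. m_pred (ws ! i) = fst (cq_body q ! i) \<and> length (m_head (ws ! i)) = length (snd (cq_body q ! i)))"
      and i: "i < length ms"
    then have i': "i < length ws" using lm by simp
    show "m_pred (ms ! i) = fst (cq_body q ! i)" using H i' wsi[OF i'] by (metis msig_simps(1) wmap_simps(1))
    show "length (m_head (ms ! i)) = length (snd (cq_body q ! i))" using H i' wsi[OF i']
      by (metis length_map length_mk_terms msig_simps(2) wmap_simps(2))
  qed
  have sm: "set ms \<subseteq> M" using Pi unfolding ms_def P_def by auto
  have hv': "\<forall>i < length ms. map (\<beta> i) (m_args (ms ! i)) \<in> ext (m_view (ms ! i))"
    using Pi msi lm unfolding P_def \<beta>_def by auto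
  have hT': "\<forall>(i, j) \<in> idx q ms. T (qv q i j) = App (fst (mh ms i j)) (map (Cst \<circ> \<beta> i) (snd (mh ms i j)))"
  proof (intro ballI, clarify)
    fix i j assume ij: "(i, j) \<in> idx q ms"
    then have ij': "(i, j) \<in> idx q ws" using lm unfolding idx_def by simp
    have il: "i < length ws" "j < length (m_head (ms ! i))" using ij vm lm unfolding idx_def valid_def by auto
    define L where "L = concat (map (\<lambda>(g, ys). map (\<beta> i) ys) (m_head (ms ! i)))"
    have K: "fst (mk_terms 0 (hsig (m_head (ms ! i))) ! j) = fst (m_head (ms ! i) ! j) \<and>
      map (\<lambda>n. L ! (n - 0)) (snd (mk_terms 0 (hsig (m_head (ms ! i))) ! j)) = map (\<beta> i) (snd (m_head (ms ! i) ! j))"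
      unfolding L_def by (rule mk_terms_nth[OF il(2)])
    have Lq: "map (\<beta>' i) [0..<length L] = L"
    proof -
      have "map (\<beta>' i) (m_args (ws ! i)) = concat (map (\<lambda>(g, ys). map (snd (F i)) ys) (m_head (fst (F i))))"
        using Pi[OF il(1)] unfolding P_def by blast
      then have "map (\<beta>' i) (m_args (ws ! i)) = L" using msi[OF il(1)] unfolding L_def \<beta>_def by simp
      moreover have "m_args (ws ! i) = [0..<length L]" unfolding wsi[OF il(1)] L_def
        by (simp only: wmap_simps msig_simps length_concat_hsig)
      ultimately show ?thesis by simp
    qed
    have mem: "mk_terms 0 (hsig (m_head (ms ! i))) ! j \<in> set (mk_terms 0 (hsig (m_head (ms ! i))))"
      using il(2) by (simp add: length_mk_terms)
    have rng: "set (snd (mk_terms 0 (hsig (m_head (ms ! i))) ! j)) \<subseteq> {0..<length L}"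
      using mk_terms_vars[of "fst (mk_terms 0 (hsig (m_head (ms ! i))) ! j)" "snd (mk_terms 0 (hsig (m_head (ms ! i))) ! j)" 0
            "hsig (m_head (ms ! i))"] mem unfolding L_def by (simp add: length_concat_hsig)
    have E: "map (\<beta>' i) (snd (mh ws i j)) = map (\<beta> i) (snd (mh ms i j))"
    proof -
      have "map (\<beta>' i) (snd (mh ws i j)) = map (\<lambda>n. L ! (n - 0)) (snd (mk_terms 0 (hsig (m_head (ms ! i))) ! j))"
        unfolding wsi[OF il(1)]
      proof (rule map_cong)
        show "snd (m_head (wmap (msig (ms ! i))) ! j) = snd (mk_terms 0 (hsig (m_head (ms ! i))) ! j)" by simp
      next
        fix n assume "n \<in> set (snd (mk_terms 0 (hsig (m_head (ms ! i))) ! j))"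
        then have "n < length L" using rng by auto
        then have "\<beta>' i n = map (\<beta>' i) [0..<length L] ! n" by simp
        then show "\<beta>' i n = L ! (n - 0)" using Lq by simp
      qed
      then show ?thesis using K by simp
    qed
    have "T (qv q i j) = App (fst (mh ws i j)) (map (Cst \<circ> \<beta>' i) (snd (mh ws i j)))" using ballpD[OF hT ij'] .
    also have "\<dots> = App (fst (mh ms i j)) (map (Cst \<circ> \<beta> i) (snd (mh ms i j)))"
      using K map_Cst_cong[OF E] unfolding wsi[OF il(1)] by simp
    finally show "T (qv q i j) = App (fst (mh ms i j)) (map (Cst \<circ> \<beta> i) (snd (mh ms i j)))" .
  qed
  have "a \<in> sem q ms ext"
    unfolding sem_def mem_Collect_eq
    by (rule exI[of _ T], rule exI[of _ \<beta>], intro conjI a hv' hT')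
  then show ?thesis using vm sm by blast
qed

lemma unf_rules_iff:
  "r \<in> unf_rules q M \<longleftrightarrow> (\<exists>ms \<sigma>. r = mk_rule q ms \<sigma> \<and> valid q ms \<and> set ms \<subseteq> M \<and> is_mgu \<sigma> (unf_eqs q ms))"
  unfolding unf_rules_def valid_def by blast

lemma eval_sem_eq:
  assumes "valid q ms" "\<forall>m \<in> set ms. wf_mapping m" "safe_cq q" "is_mgu \<sigma> (unf_eqs q ms)"
  shows "eval_rule ext (mk_rule q ms \<sigma>) = sem q ms ext"
proof
  show "eval_rule ext (mk_rule q ms \<sigma>) \<subseteq> sem q ms ext"
    using assms by (intro eval_sem_sub) (auto simp: is_mgu_def)
  show "sem q ms ext \<subseteq> eval_rule ext (mk_rule q ms \<sigma>)"
    using assms by (intro eval_sem_sup)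
qed

lemma union_rules_sem:
  fixes M :: "('L, 'f, 'w, 'vw) mapping set"
  assumes wf: "\<forall>m \<in> M. wf_mapping m" and sf: "safe_cq q"
  shows "(\<Union>r \<in> unf_rules q M. eval_rule ext r) = \<Union>{sem q ms ext | ms. valid q ms \<and> set ms \<subseteq> M}"
proof
  show "(\<Union>r \<in> unf_rules q M. eval_rule ext r) \<subseteq> \<Union>{sem q ms ext | ms. valid q ms \<and> set ms \<subseteq> M}"
  proof (rule UN_least)
    fix r assume "r \<in> unf_rules q M"
    then obtain ms \<sigma> where r: "r = mk_rule q ms \<sigma>" "valid q ms" "set ms \<subseteq> M" "is_mgu \<sigma> (unf_eqs q ms)"
      unfolding unf_rules_iff by blast
    have "eval_rule ext r = sem q ms ext" unfolding r(1)
      using eval_sem_eq[OF r(2) _ sf r(4)] wf r(3) by blast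
    then show "eval_rule ext r \<subseteq> \<Union>{sem q ms ext | ms. valid q ms \<and> set ms \<subseteq> M}" using r by blast
  qed
  show "\<Union>{sem q ms ext | ms. valid q ms \<and> set ms \<subseteq> M} \<subseteq> (\<Union>r \<in> unf_rules q M. eval_rule ext r)"
  proof
    fix a assume "a \<in> \<Union>{sem q ms ext | ms. valid q ms \<and> set ms \<subseteq> M}"
    then obtain ms where ms: "valid q ms" "set ms \<subseteq> M" "a \<in> sem q ms ext" by blast
    have c: "cons q ms" by (rule sem_cons[OF ms(3)])
    have mg: "is_mgu (sig0 q ms) (unf_eqs q ms)" by (rule sig0_mgu[OF ms(1) c])
    have "mk_rule q ms (sig0 q ms) \<in> unf_rules q M" unfolding unf_rules_iff using ms mg by blast
    moreover have "a \<in> eval_rule ext (mk_rule q ms (sig0 q ms))" using eval_sem_sup[OF ms(1) sf mg] ms(3) by blast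
    ultimately show "a \<in> (\<Union>r \<in> unf_rules q M. eval_rule ext r)" by blast
  qed
qed

lemma eval_finite:
  fixes ext :: "'vw \<Rightarrow> 'c list set" and r :: "('vw, 'f, 'x) rule"
  assumes fe: "\<forall>V. finite (ext V)"
    and hs: "(\<Union>t \<in> set (r_head r). tv t) \<subseteq> (\<Union>(V, ts) \<in> set (r_body r). \<Union>t \<in> set ts. tv t)"
  shows "finite (eval_rule ext r)"
proof -
  define Vb where "Vb = (\<Union>(V, ts) \<in> set (r_body r). \<Union>t \<in> set ts. tv t)"
  define K where "K = (\<Union>(V, ts) \<in> set (r_body r). \<Union>c \<in> ext V. set c)"
  have fVb: "finite Vb" unfolding Vb_def by (auto simp: finite_tv)
  have fK: "finite K" unfolding K_def using fe by auto
  obtain xs where xs: "set xs = Vb" using finite_list[OF fVb] by blast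
  define F :: "'c list \<Rightarrow> ('f, 'c) gtrm list" where "F c = map (gval (\<lambda>x. the (map_of (zip xs c) x))) (r_head r)" for c
  have "eval_rule ext r \<subseteq> F ` {c. set c \<subseteq> K \<and> length c = length xs}"
  proof
    fix a assume "a \<in> eval_rule ext r"
    then obtain \<alpha> where a: "a = map (gval \<alpha>) (r_head r)"
      and b: "\<forall>(V, ts) \<in> set (r_body r). map (gval \<alpha>) ts \<in> map Cst ` ext V"
      unfolding eval_rule_def by blast
    have inK: "\<alpha> x \<in> K" if x: "x \<in> Vb" for x
    proof -
      obtain V ts t where Vt: "(V, ts) \<in> set (r_body r)" "t \<in> set ts" "x \<in> tv t" using x unfolding Vb_def by blast
      obtain c where c: "c \<in> ext V" "map (gval \<alpha>) ts = map Cst c" using b Vt(1) by blast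
      have "gval \<alpha> t \<in> set (map Cst c)" using c(2) Vt(2) by (metis image_eqI list.set_map)
      then obtain d where d: "d \<in> set c" "gval \<alpha> t = Cst d" by auto
      then have "t = Var x \<and> \<alpha> x = d" using Vt(3) by (cases t) auto
      then show ?thesis unfolding K_def using Vt(1) c(1) d(1) by blast
    qed
    have "map \<alpha> xs \<in> {c. set c \<subseteq> K \<and> length c = length xs}" using inK xs by auto
    moreover have "F (map \<alpha> xs) = a"
      unfolding a F_def
    proof (intro map_cong refl gval_cong)
      fix t x assume "t \<in> set (r_head r)" "x \<in> tv t"
      then have "x \<in> set xs" using hs xs unfolding Vb_def by blast
      then show "the (map_of (zip xs (map \<alpha> xs)) x) = \<alpha> x" by (simp add: map_of_zip_map)
    qed
    ultimately show "a \<in> F ` {c. set c \<subseteq> K \<and> length c = length xs}" by blast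
  qed
  moreover have "finite {c. set c \<subseteq> K \<and> length c = length xs}" using fK by (rule finite_lists_length_eq)
  ultimately show ?thesis by (rule finite_subset[OF _ finite_imageI])
qed

lemma head_vars_sub:
  assumes v: "valid q ms" and wf: "\<forall>m \<in> set ms. wf_mapping m" and sf: "safe_cq q" and u: "is_unifier \<sigma> (unf_eqs q ms)"
  shows "(\<Union>t \<in> set (r_head (mk_rule q ms \<sigma>)). tv t) \<subseteq> (\<Union>(V, ts) \<in> set (r_body (mk_rule q ms \<sigma>)). \<Union>t \<in> set ts. tv t)"
proof
  fix x assume "x \<in> (\<Union>t \<in> set (r_head (mk_rule q ms \<sigma>)). tv t)"
  then obtain v where vx: "v \<in> set (cq_head q)" "x \<in> tv (\<sigma> (Inl v))" by (auto simp: mk_rule_simps)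
  obtain i j where ij: "(i, j) \<in> idx q ms" "qv q i j = v" using safe_occ[OF sf v vx(1)] by blast
  have s: "\<sigma> (Inl (qv q i j)) = Fun (fst (mh ms i j)) (map (\<lambda>w. \<sigma> (Inr (i, w))) (snd (mh ms i j)))"
    using ballpD[OF u[unfolded unifier_char[OF v]] ij(1)] .
  obtain w where w: "w \<in> set (snd (mh ms i j))" "x \<in> tv (\<sigma> (Inr (i, w)))" using vx(2) ij(2) s by auto
  have il: "i < length ms" "j < length (m_head (ms ! i))" using ij v unfolding idx_def valid_def by auto
  then have "mh ms i j \<in> set (m_head (ms ! i))" by simp
  then have sub: "set (snd (mh ms i j)) \<subseteq> set (m_args (ms ! i))" using wf il(1) unfolding wf_mapping_def
    by (metis (no_types, lifting) case_prodD nth_mem prod.collapse)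
  have "(m_view (ms ! i), map (\<lambda>w. \<sigma> (Inr (i, w))) (m_args (ms ! i))) \<in> set (r_body (mk_rule q ms \<sigma>))"
    using il(1) by (auto simp: mk_rule_simps)
  moreover have "\<sigma> (Inr (i, w)) \<in> set (map (\<lambda>w. \<sigma> (Inr (i, w))) (m_args (ms ! i)))" using w(1) sub by auto
  ultimately show "x \<in> (\<Union>(V, ts) \<in> set (r_body (mk_rule q ms \<sigma>)). \<Union>t \<in> set ts. tv t)" using w(2) by blast
qed

lemma valid_wrap: "valid q ms \<Longrightarrow> valid q (map (\<lambda>m. wmap (msig m)) ms)"
  unfolding valid_def by (simp add: length_mk_terms)

lemma wf_wrap: "\<forall>m \<in> wrap M. wf_mapping m"
  unfolding wrap_def using wf_wmap by blast

lemma answers_eq: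
  fixes M :: "('L, 'f, 'w, 'vw) mapping set"
  assumes wf: "\<forall>m \<in> M. wf_mapping m" and sf: "safe_cq q"
  shows "unf_answers q M ext = (\<Union>r \<in> unf_rules q (wrap M). eval_rule (wrap_ext M ext) r)"
proof -
  have A: "unf_answers q M ext = \<Union>{sem q ms ext | ms. valid q ms \<and> set ms \<subseteq> M}"
    unfolding unf_answers_def by (rule union_rules_sem[OF wf sf])
  have B: "(\<Union>r \<in> unf_rules q (wrap M). eval_rule (wrap_ext M ext) r) =
      \<Union>{sem q ws (wrap_ext M ext) | ws. valid q ws \<and> set ws \<subseteq> wrap M}"
    by (rule union_rules_sem[OF wf_wrap sf])
  have "\<Union>{sem q ms ext | ms. valid q ms \<and> set ms \<subseteq> M} = \<Union>{sem q ws (wrap_ext M ext) | ws. valid q ws \<and> set ws \<subseteq> wrap M}"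
  proof
    show "\<Union>{sem q ms ext | ms. valid q ms \<and> set ms \<subseteq> M} \<subseteq> \<Union>{sem q ws (wrap_ext M ext) | ws. valid q ws \<and> set ws \<subseteq> wrap M}"
    proof
      fix a assume "a \<in> \<Union>{sem q ms ext | ms. valid q ms \<and> set ms \<subseteq> M}"
      then obtain ms where ms: "valid q ms" "set ms \<subseteq> M" "a \<in> sem q ms ext" by blast
      have "a \<in> sem q (map (\<lambda>m. wmap (msig m)) ms) (wrap_ext M ext)" using sem_M_to_W[OF ms(1,2)] ms(3) by blast
      moreover have "valid q (map (\<lambda>m. wmap (msig m)) ms)" by (rule valid_wrap[OF ms(1)])
      moreover have "set (map (\<lambda>m. wmap (msig m)) ms) \<subseteq> wrap M" using ms(2) unfolding wrap_def by auto
      ultimately show "a \<in> \<Union>{sem q ws (wrap_ext M ext) | ws. valid q ws \<and> set ws \<subseteq> wrap M}" by blast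
    qed
  next
    show "\<Union>{sem q ws (wrap_ext M ext) | ws. valid q ws \<and> set ws \<subseteq> wrap M} \<subseteq> \<Union>{sem q ms ext | ms. valid q ms \<and> set ms \<subseteq> M}"
    proof
      fix a assume "a \<in> \<Union>{sem q ws (wrap_ext M ext) | ws. valid q ws \<and> set ws \<subseteq> wrap M}"
      then obtain ws where ws: "valid q ws" "set ws \<subseteq> wrap M" "a \<in> sem q ws (wrap_ext M ext)" by blast
      from sem_W_to_M[OF ws] obtain ms where "valid q ms" "set ms \<subseteq> M" "a \<in> sem q ms ext" by blast
      then show "a \<in> \<Union>{sem q ms ext | ms. valid q ms \<and> set ms \<subseteq> M}" by blast
    qed
  qed
  then show ?thesis using A B by simp
qed

lemma finite_answers:
  fixes M :: "('L, 'f, 'w, 'vw) mapping set"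
  assumes fM: "finite M" and wf: "\<forall>m \<in> M. wf_mapping m" and fe: "\<forall>V. finite (ext V)" and sf: "safe_cq q"
  shows "finite (unf_answers q M ext)"
proof -
  have "unf_answers q M ext = (\<Union>ms \<in> {ms. valid q ms \<and> set ms \<subseteq> M}. sem q ms ext)"
    unfolding unf_answers_def union_rules_sem[OF wf sf] by blast
  moreover have "finite {ms. valid q ms \<and> set ms \<subseteq> M}"
  proof (rule finite_subset)
    show "{ms. valid q ms \<and> set ms \<subseteq> M} \<subseteq> {ms. set ms \<subseteq> M \<and> length ms = length (cq_body q)}"
      unfolding valid_def by auto
    show "finite {ms. set ms \<subseteq> M \<and> length ms = length (cq_body q)}" using fM by (rule finite_lists_length_eq)
  qed
  moreover have "finite (sem q ms ext)" if ms: "valid q ms \<and> set ms \<subseteq> M" for ms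
  proof (cases "sem q ms ext = {}")
    case False
    then obtain a where "a \<in> sem q ms ext" by blast
    then have c: "cons q ms" by (rule sem_cons)
    have mg: "is_mgu (sig0 q ms) (unf_eqs q ms)" using sig0_mgu ms c by blast
    have wfs: "\<forall>m \<in> set ms. wf_mapping m" using wf ms by blast
    have "sem q ms ext = eval_rule ext (mk_rule q ms (sig0 q ms))"
      using eval_sem_eq[OF conjunct1[OF ms] wfs sf mg, of ext] by simp
    moreover have "finite (eval_rule ext (mk_rule q ms (sig0 q ms)))"
      using eval_finite[OF fe head_vars_sub[OF _ wfs sf sig0_unifier[OF _ c]]] ms by blast
    ultimately show ?thesis by simp
  qed simp
  ultimately show ?thesis by auto
qed

lemma rename_rel_refl: "r \<in> R \<Longrightarrow> (r, r) \<in> rename_rel R"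
  unfolding rename_rel_def using rename_id[of r] bij_id by blast

lemma class_props:
  assumes "C \<in> unf_program q M"
  shows "rule_rep C \<in> unf_rules q M \<and> (\<exists>r \<in> unf_rules q M. C = rename_rel (unf_rules q M) `` {r} \<and>
      (\<exists>\<rho>. bij \<rho> \<and> rename_rule \<rho> r = rule_rep C))"
proof -
  obtain r where r: "r \<in> unf_rules q M" "C = rename_rel (unf_rules q M) `` {r}"
    using assms unfolding unf_program_def quotient_def by blast
  have "r \<in> C" using r rename_rel_refl by blast
  then have "rule_rep C \<in> C" unfolding rule_rep_def by (rule someI)
  then have "(r, rule_rep C) \<in> rename_rel (unf_rules q M)" using r(2) by blast
  then have X: "rule_rep C \<in> unf_rules q M \<and> (\<exists>\<rho>. bij \<rho> \<and> rename_rule \<rho> r = rule_rep C)"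
    unfolding rename_rel_def by simp
  show ?thesis using r X by blast
qed

theorem theorem6:
  fixes M :: "('L, 'f, 'w, 'vw) mapping set"
    and ext :: "'vw \<Rightarrow> 'c list set"
    and q :: "('L, 'v) cq"
  assumes "finite M"
    and "\<forall>m \<in> M. wf_mapping m"
    and "\<forall>V. finite (ext V)"
    and "safe_cq q"
    and "atm_no_repeated_rows (unf_program q (wrap M))"
  shows "card (unf_answers q M ext) =
    (\<Sum>C \<in> unf_program q (wrap M). card (eval_rule (wrap_ext M ext) (rule_rep C)))"
proof -
  note fM = assms(1) and wf = assms(2) and fe = assms(3) and sf = assms(4) and inj = assms(5)
  define R where "R = unf_rules q (wrap M)"
  define P where "P = unf_program q (wrap M)"
  define wext where "wext = wrap_ext M ext"
  have U: "unf_answers q M ext = (\<Union>C \<in> P. eval_rule wext (rule_rep C))"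
  proof -
    have "(\<Union>C \<in> P. eval_rule wext (rule_rep C)) = (\<Union>r \<in> R. eval_rule wext r)"
    proof
      show "(\<Union>C \<in> P. eval_rule wext (rule_rep C)) \<subseteq> (\<Union>r \<in> R. eval_rule wext r)"
      proof (rule UN_least)
        fix C assume "C \<in> P"
        then have "rule_rep C \<in> R" using conjunct1[OF class_props] unfolding P_def R_def by blast
        then show "eval_rule wext (rule_rep C) \<subseteq> (\<Union>r \<in> R. eval_rule wext r)" by (rule UN_upper)
      qed
      show "(\<Union>r \<in> R. eval_rule wext r) \<subseteq> (\<Union>C \<in> P. eval_rule wext (rule_rep C))"
      proof (rule UN_least)
        fix r assume r: "r \<in> R"
        define C where "C = rename_rel R `` {r}"
        have CP: "C \<in> P" unfolding C_def P_def unf_program_def R_def[symmetric] using r by (rule quotientI)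
        have "r \<in> C" unfolding C_def using rename_rel_refl[OF r] by simp
        then have "rule_rep C \<in> C" unfolding rule_rep_def by (rule someI)
        then have "(r, rule_rep C) \<in> rename_rel R" unfolding C_def by simp
        then have "\<exists>\<rho>. bij \<rho> \<and> rename_rule \<rho> r = rule_rep C" unfolding rename_rel_def by simp
        then obtain \<rho> where \<rho>: "bij \<rho>" "rename_rule \<rho> r = rule_rep C" by (elim exE conjE)
        have "eval_rule wext (rule_rep C) = eval_rule wext r" unfolding \<rho>(2)[symmetric] by (rule eval_rename[OF \<rho>(1)])
        then show "eval_rule wext r \<subseteq> (\<Union>C \<in> P. eval_rule wext (rule_rep C))" using CP by blast
      qed
    qed
    moreover have "unf_answers q M ext = (\<Union>r \<in> R. eval_rule wext r)" unfolding wext_def R_def by (rule answers_eq[OF wf sf])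
    ultimately show ?thesis by simp
  qed
  have fin_ans: "finite (unf_answers q M ext)" by (rule finite_answers[OF fM wf fe sf])
  have finC: "finite (eval_rule wext (rule_rep C))" if "C \<in> P" for C
  proof -
    have "eval_rule wext (rule_rep C) \<subseteq> unf_answers q M ext" unfolding U using that by (rule UN_upper)
    then show ?thesis using fin_ans by (rule finite_subset)
  qed
  have row: "atm_row (rule_rep C) \<in> {xs. set xs \<subseteq> insert None (Some ` (\<Union>m \<in> wrap M. fst ` set (m_head m))) \<and>
      length xs = length (cq_head q)}" if C: "C \<in> P" for C
  proof -
    have "rule_rep C \<in> R" using class_props C unfolding P_def R_def by blast
    then obtain ws \<sigma> where r: "rule_rep C = mk_rule q ws \<sigma>" "valid q ws" "set ws \<subseteq> wrap M" "is_mgu \<sigma> (unf_eqs q ws)"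
      unfolding R_def unf_rules_iff by blast
    have u: "is_unifier \<sigma> (unf_eqs q ws)" using r(4) unfolding is_mgu_def by blast
    have "head_sym (\<sigma> (Inl v)) \<in> Some ` (\<Union>m \<in> wrap M. fst ` set (m_head m))" if v: "v \<in> set (cq_head q)" for v
    proof -
      obtain i j where ij: "(i, j) \<in> idx q ws" "qv q i j = v" using safe_occ[OF sf r(2) v] by blast
      have s: "\<sigma> (Inl (qv q i j)) = Fun (fst (mh ws i j)) (map (\<lambda>w. \<sigma> (Inr (i, w))) (snd (mh ws i j)))"
        using ballpD[OF u[unfolded unifier_char[OF r(2)]] ij(1)] .
      have il: "i < length ws" "j < length (m_head (ws ! i))" using ij r(2) unfolding idx_def valid_def by auto
      have "ws ! i \<in> wrap M" using r(3) il(1) by auto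
      moreover have "mh ws i j \<in> set (m_head (ws ! i))" using il(2) by simp
      ultimately have "fst (mh ws i j) \<in> (\<Union>m \<in> wrap M. fst ` set (m_head m))" by blast
      then show ?thesis using s ij(2) by auto
    qed
    then show ?thesis unfolding r(1) atm_row_def by (auto simp: mk_rule_simps)
  qed
  have finS: "finite (insert None (Some ` (\<Union>m \<in> wrap M. fst ` set (m_head m))))"
    using fM unfolding wrap_def by auto
  have finP: "finite P"
  proof (rule finite_imageD)
    show "inj_on (\<lambda>C. atm_row (rule_rep C)) P" using inj unfolding P_def atm_no_repeated_rows_def .
    show "finite ((\<lambda>C. atm_row (rule_rep C)) ` P)"
    proof (rule finite_subset[OF _ finite_lists_length_eq[OF finS]])
      show "(\<lambda>C. atm_row (rule_rep C)) ` P \<subseteq> {xs. set xs \<subseteq> insert None (Some ` (\<Union>m \<in> wrap M. fst ` set (m_head m))) \<and>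
      length xs = length (cq_head q)}" by (rule image_subsetI) (rule row)
    qed
  qed
  have disj: "eval_rule wext (rule_rep C) \<inter> eval_rule wext (rule_rep C') = {}"
    if "C \<in> P" "C' \<in> P" "C \<noteq> C'" for C C'
  proof (rule ccontr)
    assume "eval_rule wext (rule_rep C) \<inter> eval_rule wext (rule_rep C') \<noteq> {}"
    then obtain a where a: "a \<in> eval_rule wext (rule_rep C)" "a \<in> eval_rule wext (rule_rep C')" by blast
    have key: "map gsym a = atm_row r" if ar: "a \<in> eval_rule wext r" for r :: "('L \<times> ('f \<times> nat) list, 'f, 'v + nat \<times> nat) rule"
    proof -
      obtain \<alpha> where "a = map (gval \<alpha>) (r_head r)" using ar unfolding eval_rule_def by blast
      then show ?thesis unfolding atm_row_def by (simp add: gsym_gval o_def)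
    qed
    have "atm_row (rule_rep C) = atm_row (rule_rep C')" using key[OF a(1)] key[OF a(2)] by simp
    moreover have "inj_on (\<lambda>C. atm_row (rule_rep C)) P" using inj unfolding P_def atm_no_repeated_rows_def .
    ultimately have "C = C'" using inj_onD[of "\<lambda>C. atm_row (rule_rep C)" P C C'] that(1,2) by simp
    then show False using that(3) by simp
  qed
  have "card (\<Union>C \<in> P. eval_rule wext (rule_rep C)) = (\<Sum>C \<in> P. card (eval_rule wext (rule_rep C)))"
    by (rule card_UN_disjoint[OF finP]) (use finC disj in auto)
  then show ?thesis unfolding U P_def wext_def .
qed

end
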